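(* Let $G$ be a connected finite graph without a cut-vertex, let $\mathcal{L}$ be a degree-list assignment for $G$, and let $g$ be a partial proper $\mathcal{L}$-coloring of $G$. If $G$ has no proper $\mathcal{L}$-coloring $f$ with $|f^{-1}(\alpha)|\geq|g^{-1}(\alpha)|$ for all colors $\alpha$, then all the lists $\mathcal{L}(x)$, $x\in V(G)$, are equal.
   Context: A cut-vertex of a connected graph $G$ is a vertex $x$ with $G-x$ disconnected. A list assignment assigns to each vertex $x$ a set $\mathcal{L}(x)$; it is a degree-list assignment if $|\mathcal{L}(x)|\geq\deg_G(x)$ for all $x$. A (partial) $\mathcal{L}$-coloring is a function $f$ with domain $V(G)$ (resp. a subset of $V(G)$) and $f(x)\in\mathcal{L}(x)$; it is proper if adjacent vertices in its domain get different colors. *)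

theory Defs
  imports Main
begin

definition finite_graph :: "'a set \<Rightarrow> ('a \<Rightarrow> 'a \<Rightarrow> bool) \<Rightarrow> bool" where
  "finite_graph V E \<longleftrightarrow> finite V \<and> (\<forall>x y. E x y \<longrightarrow> x \<in> V \<and> y \<in> V) \<and>
     (\<forall>x y. E x y \<longrightarrow> E y x) \<and> (\<forall>x. \<not> E x x)"

definition joined_in :: "'a set \<Rightarrow> ('a \<Rightarrow> 'a \<Rightarrow> bool) \<Rightarrow> 'a \<Rightarrow> 'a \<Rightarrow> bool" where
  "joined_in W E u v \<longleftrightarrow> (\<lambda>a b. E a b \<and> a \<in> W \<and> b \<in> W)\<^sup>*\<^sup>* u v"

definition connected_graph :: "'a set \<Rightarrow> ('a \<Rightarrow> 'a \<Rightarrow> bool) \<Rightarrow> bool" where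
  "connected_graph V E \<longleftrightarrow> V \<noteq> {} \<and> (\<forall>u\<in>V. \<forall>v\<in>V. joined_in V E u v)"

definition cut_vertex :: "'a set \<Rightarrow> ('a \<Rightarrow> 'a \<Rightarrow> bool) \<Rightarrow> 'a \<Rightarrow> bool" where
  "cut_vertex V E x \<longleftrightarrow> x \<in> V \<and>
     (\<exists>u\<in>V - {x}. \<exists>v\<in>V - {x}. \<not> joined_in (V - {x}) E u v)"

definition degree :: "'a set \<Rightarrow> ('a \<Rightarrow> 'a \<Rightarrow> bool) \<Rightarrow> 'a \<Rightarrow> nat" where
  "degree V E x = card {y \<in> V. E x y}"

text \<open>|L x| \<ge> deg x; an infinite list trivially satisfies this.\<close>
definition degree_list_assignment ::
  "'a set \<Rightarrow> ('a \<Rightarrow> 'a \<Rightarrow> bool) \<Rightarrow> ('a \<Rightarrow> 'c set) \<Rightarrow> bool" where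
  "degree_list_assignment V E L \<longleftrightarrow>
     (\<forall>x\<in>V. finite (L x) \<longrightarrow> degree V E x \<le> card (L x))"

definition proper_L_coloring ::
  "'a set \<Rightarrow> ('a \<Rightarrow> 'a \<Rightarrow> bool) \<Rightarrow> ('a \<Rightarrow> 'c set) \<Rightarrow> ('a \<Rightarrow> 'c) \<Rightarrow> bool" where
  "proper_L_coloring V E L f \<longleftrightarrow>
     (\<forall>x\<in>V. f x \<in> L x) \<and> (\<forall>x\<in>V. \<forall>y\<in>V. E x y \<longrightarrow> f x \<noteq> f y)"

definition partial_proper_L_coloring ::
  "'a set \<Rightarrow> ('a \<Rightarrow> 'a \<Rightarrow> bool) \<Rightarrow> ('a \<Rightarrow> 'c set) \<Rightarrow> ('a \<Rightarrow> 'c option) \<Rightarrow> bool" where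
  "partial_proper_L_coloring V E L g \<longleftrightarrow> dom g \<subseteq> V \<and>
     (\<forall>x c. g x = Some c \<longrightarrow> c \<in> L x) \<and>
     (\<forall>x y c d. E x y \<longrightarrow> g x = Some c \<longrightarrow> g y = Some d \<longrightarrow> c \<noteq> d)"

end

theory Submission
  imports Defs
begin

definition sw :: "'a \<Rightarrow> 'a \<Rightarrow> 'a \<Rightarrow> 'a" where
  "sw p q x = (if x = p then q else if x = q then p else x)"

lemma sw_sw[simp]: "sw p q (sw p q x) = x"
  by (auto simp: sw_def)

lemma sw_inj: "inj (sw p q)"
  by (metis injI sw_sw)

lemma sw_image_iff: "x \<in> sw p q ` A \<longleftrightarrow> sw p q x \<in> A"
  by (metis image_iff sw_sw)

locale S =
  fixes V :: "'a set" and E :: "'a \<Rightarrow> 'a \<Rightarrow> bool"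
    and L :: "'a \<Rightarrow> 'c set" and g :: "'a \<Rightarrow> 'c option"
  assumes fg: "finite_graph V E" and dl: "degree_list_assignment V E L"
begin

lemma finV: "finite V" using fg by (simp add: finite_graph_def)
lemma Ein: "E x y \<Longrightarrow> x \<in> V \<and> y \<in> V" using fg by (simp add: finite_graph_def)
lemma Esym: "E x y \<Longrightarrow> E y x" using fg by (simp add: finite_graph_def)
lemma Eirr: "\<not> E x x" using fg by (simp add: finite_graph_def)

definition C where
  "C h \<longleftrightarrow> partial_proper_L_coloring V E L h \<and>
     (\<forall>\<alpha>. card {x \<in> V. g x = Some \<alpha>} \<le> card {x \<in> V. h x = Some \<alpha>})"

definition M where
  "M h \<longleftrightarrow> C h \<and> (\<forall>h'. C h' \<longrightarrow> card (dom h') \<le> card (dom h))"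

lemma C_dom: "C h \<Longrightarrow> dom h \<subseteq> V"
  by (simp add: C_def partial_proper_L_coloring_def)

lemma C_col: "C h \<Longrightarrow> h x = Some c \<Longrightarrow> c \<in> L x"
  by (simp add: C_def partial_proper_L_coloring_def)

lemma C_prop: "C h \<Longrightarrow> E x y \<Longrightarrow> h x = Some c \<Longrightarrow> h y = Some d \<Longrightarrow> c \<noteq> d"
  unfolding C_def partial_proper_L_coloring_def by blast

lemma stuck:
  assumes "M h" "p \<in> V" "h p = None" "c \<in> L p"
  shows "\<exists>y. E p y \<and> h y = Some c"
proof (rule ccontr)
  assume no: "\<not> (\<exists>y. E p y \<and> h y = Some c)"
  let ?h = "h(p := Some c)"
  have Ch: "C h" using assms(1) by (simp add: M_def)
  have "C ?h"
    unfolding C_def partial_proper_L_coloring_def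
  proof (intro conjI allI impI)
    show "dom ?h \<subseteq> V" using C_dom[OF Ch] assms(2) by auto
  next
    fix x c' assume "?h x = Some c'" then show "c' \<in> L x"
      using C_col[OF Ch] assms(4) by (cases "x = p") auto
  next
    fix x y c1 d assume e: "E x y" and a: "?h x = Some c1" and b: "?h y = Some d"
    show "c1 \<noteq> d"
    proof (cases "x = p")
      case True
      then have "y \<noteq> p" using e Eirr by auto
      then show ?thesis using True a b no e by auto
    next
      case False
      show ?thesis
      proof (cases "y = p")
        case True
        then show ?thesis using False a b no Esym[OF e] by auto
      next
        case False2: False
        then show ?thesis using False a b C_prop[OF Ch e] by auto
      qed
    qed
  next
    fix \<alpha>
    have "{x \<in> V. h x = Some \<alpha>} \<subseteq> {x \<in> V. ?h x = Some \<alpha>}" using assms(3) by auto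
    then have "card {x \<in> V. h x = Some \<alpha>} \<le> card {x \<in> V. ?h x = Some \<alpha>}"
      by (rule card_mono[rotated]) (simp add: finV)
    then show "card {x \<in> V. g x = Some \<alpha>} \<le> card {x \<in> V. ?h x = Some \<alpha>}"
      using Ch unfolding C_def by (meson order_trans)
  qed
  then have le: "card (dom ?h) \<le> card (dom h)" using assms(1) unfolding M_def by blast
  have fd: "finite (dom h)" using C_dom[OF Ch] finV finite_subset by blast
  have "dom ?h = insert p (dom h)" by auto
  moreover have "p \<notin> dom h" using assms(3) by auto
  ultimately have "card (dom ?h) = Suc (card (dom h))" using fd by simp
  with le show False by simp
qed

lemma cardeq:
  assumes "M h" "p \<in> V" "h p = None"
  shows "Some ` L p = h ` {y \<in> V. E p y} \<and> inj_on h {y \<in> V. E p y}"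
proof -
  let ?N = "{y \<in> V. E p y}"
  have fN: "finite ?N" using finV by simp
  have sub: "Some ` L p \<subseteq> h ` ?N"
  proof
    fix z assume "z \<in> Some ` L p"
    then obtain c where c: "c \<in> L p" "z = Some c" by auto
    then obtain y where "E p y" "h y = Some c" using stuck[OF assms c(1)] by auto
    then show "z \<in> h ` ?N" using c Ein by force
  qed
  have fT: "finite (h ` ?N)" using fN by simp
  have "finite (Some ` L p)" using sub fT finite_subset by blast
  then have fL: "finite (L p)" by (simp add: finite_image_iff)
  have cS: "card (Some ` L p) = card (L p)" by (simp add: card_image)
  have dg: "card ?N \<le> card (L p)"
    using dl fL assms(2) by (simp add: degree_list_assignment_def degree_def)
  have cT: "card (h ` ?N) \<le> card ?N" by (rule card_image_le[OF fN])
  have eq: "Some ` L p = h ` ?N"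
    by (rule card_seteq[OF fT sub]) (use cS dg cT in linarith)
  have "card (h ` ?N) = card ?N"
  proof -
    have "card (h ` ?N) = card (L p)" using eq cS by simp
    then show ?thesis using dg cT by linarith
  qed
  then have "inj_on h ?N" by (rule eq_card_imp_inj_on[OF fN])
  with eq show ?thesis by simp
qed

lemma nbr_in:
  assumes "M h" "p \<in> V" "h p = None" "E p y" "h y = Some c"
  shows "c \<in> L p"
proof -
  have "Some c \<in> h ` {y \<in> V. E p y}" using assms(4,5) Ein by force
  then show ?thesis using cardeq[OF assms(1-3)] by (metis image_iff option.inject)
qed

lemma nbr_inj:
  assumes "M h" "p \<in> V" "h p = None" "E p y1" "E p y2" "h y1 = h y2"
  shows "y1 = y2"
  using cardeq[OF assms(1-3)] assms(4-6) Ein by (auto simp: inj_on_def)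

lemma move:
  assumes "M h" "p \<in> V" "h p = None" "E p q"
  shows "M (h \<circ> sw p q)"
proof -
  have Ch: "C h" using assms(1) by (simp add: M_def)
  have qV: "q \<in> V" using Ein[OF assms(4)] by simp
  have pq: "p \<noteq> q" using assms(4) Eirr by auto
  have swV: "sw p q x \<in> V \<longleftrightarrow> x \<in> V" for x
    using assms(2) qV by (auto simp: sw_def)
  have cnt: "{x \<in> V. (h \<circ> sw p q) x = Some \<alpha>} = sw p q ` {x \<in> V. h x = Some \<alpha>}" for \<alpha>
    by (auto simp: sw_image_iff swV)
  have dm: "dom (h \<circ> sw p q) = sw p q ` dom h"
    by (auto simp: sw_image_iff)
  have ccnt: "card {x \<in> V. (h \<circ> sw p q) x = Some \<alpha>} = card {x \<in> V. h x = Some \<alpha>}" for \<alpha>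
    unfolding cnt by (rule card_image) (meson inj_on_subset sw_inj subset_UNIV)
  have cdom: "card (dom (h \<circ> sw p q)) = card (dom h)"
    unfolding dm by (rule card_image) (meson inj_on_subset sw_inj subset_UNIV)
  have "C (h \<circ> sw p q)"
    unfolding C_def partial_proper_L_coloring_def
  proof (intro conjI allI impI)
    show "dom (h \<circ> sw p q) \<subseteq> V" using C_dom[OF Ch] by (auto simp: dm swV sw_image_iff)
  next
    fix x c assume a: "(h \<circ> sw p q) x = Some c"
    show "c \<in> L x"
    proof (cases "x = p")
      case True
      then have "h q = Some c" using a by (simp add: sw_def)
      then show ?thesis using nbr_in[OF assms(1-4)] True by simp
    next
      case False
      then have "x \<noteq> q" using a assms(3) pq by (auto simp: sw_def)
      then show ?thesis using False a C_col[OF Ch] by (simp add: sw_def)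
    qed
  next
    fix x y c d assume e: "E x y" and a: "(h \<circ> sw p q) x = Some c"
      and b: "(h \<circ> sw p q) y = Some d"
    have xq: "x \<noteq> q" using a assms(3) pq by (auto simp: sw_def)
    have yq: "y \<noteq> q" using b assms(3) pq by (auto simp: sw_def)
    show "c \<noteq> d"
    proof (cases "x = p")
      case True
      have yp: "y \<noteq> p" using True e Eirr by auto
      have hq: "h q = Some c" using a True by (simp add: sw_def)
      have hy: "h y = Some d" using b yp yq by (simp add: sw_def)
      show ?thesis
      proof
        assume "c = d"
        then have "y = q" using nbr_inj[OF assms(1-3) _ assms(4)] e True hq hy by metis
        then show False using yq by simp
      qed
    next
      case False
      show ?thesis
      proof (cases "y = p")
        case True
        have hq: "h q = Some d" using b True by (simp add: sw_def)
        have hx: "h x = Some c" using a False xq by (simp add: sw_def)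
        show ?thesis
        proof
          assume "c = d"
          then have "x = q" using nbr_inj[OF assms(1-3) _ assms(4)] Esym[OF e] True hq hx by metis
          then show False using xq by simp
        qed
      next
        case False2: False
        have "h x = Some c" using a False xq by (simp add: sw_def)
        moreover have "h y = Some d" using b False2 yq by (simp add: sw_def)
        ultimately show ?thesis using C_prop[OF Ch e] by simp
      qed
    qed
  next
    fix \<alpha> show "card {x \<in> V. g x = Some \<alpha>} \<le> card {x \<in> V. (h \<circ> sw p q) x = Some \<alpha>}"
      using Ch ccnt by (simp add: C_def)
  qed
  then show ?thesis using assms(1) cdom by (simp add: M_def)
qed

lemma reach:
  assumes "M h" "h p = None" "W \<subseteq> V" "joined_in W E p x"
  shows "\<exists>h'. M h' \<and> h' x = None \<and> (\<forall>v. v \<notin> W \<longrightarrow> h' v = h v)"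
  using assms(4) unfolding joined_in_def
proof (induction rule: rtranclp_induct)
  case base
  then show ?case using assms by blast
next
  case (step y z)
  then obtain h' where h': "M h'" "h' y = None" "\<forall>v. v \<notin> W \<longrightarrow> h' v = h v" by blast
  have yV: "y \<in> V" using step(2) assms(3) by auto
  have yz: "y \<noteq> z" using step(2) Eirr by auto
  have M2: "M (h' \<circ> sw y z)" using move[OF h'(1) yV h'(2)] step(2) by simp
  have "(h' \<circ> sw y z) z = None" using h'(2) yz by (simp add: sw_def)
  moreover have "\<forall>v. v \<notin> W \<longrightarrow> (h' \<circ> sw y z) v = h v"
    using h'(3) step(2) by (auto simp: sw_def)
  ultimately show ?case using M2 by blast
qed

lemma sub:
  assumes "M h" "p \<in> V" "h p = None" "E p z" "\<not> cut_vertex V E p"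
  shows "L p \<subseteq> L z"
proof
  fix d assume d: "d \<in> L p"
  obtain w where w: "E p w" "h w = Some d" using stuck[OF assms(1-3) d] by blast
  have Ch: "C h" using assms(1) by (simp add: M_def)
  show "d \<in> L z"
  proof (cases "w = z")
    case True
    then show ?thesis using w C_col[OF Ch] by simp
  next
    case False
    let ?h1 = "h \<circ> sw p w"
    have M1: "M ?h1" by (rule move[OF assms(1-3) w(1)])
    have pw: "p \<noteq> w" using w(1) Eirr by auto
    have h1w: "?h1 w = None" using assms(3) pw by (simp add: sw_def)
    have h1p: "?h1 p = Some d" using w(2) by (simp add: sw_def)
    have wV: "w \<in> V - {p}" using Ein[OF w(1)] pw by auto
    have zV: "z \<in> V - {p}" using Ein[OF assms(4)] assms(4) Eirr by auto
    have "joined_in (V - {p}) E w z"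
      using assms(5) assms(2) wV zV unfolding cut_vertex_def by blast
    then obtain h2 where h2: "M h2" "h2 z = None" "\<forall>v. v \<notin> V - {p} \<longrightarrow> h2 v = ?h1 v"
      using reach[OF M1 h1w] by blast
    have "h2 p = Some d" using h2(3) h1p by simp
    then show ?thesis
      using nbr_in[OF h2(1) _ h2(2) Esym[OF assms(4)]] zV by simp
  qed
qed

end

theorem lemma4p3:
  fixes V :: "'a set" and E :: "'a \<Rightarrow> 'a \<Rightarrow> bool"
    and L :: "'a \<Rightarrow> 'c set" and g :: "'a \<Rightarrow> 'c option"
  assumes "finite_graph V E"
    and "connected_graph V E"
    and "\<forall>x. \<not> cut_vertex V E x"
    and "degree_list_assignment V E L"
    and "partial_proper_L_coloring V E L g"
    and "\<not> (\<exists>f. proper_L_coloring V E L f \<and>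
              (\<forall>\<alpha>. card {x \<in> V. g x = Some \<alpha>} \<le> card {x \<in> V. f x = \<alpha>}))"
  shows "\<forall>x\<in>V. \<forall>y\<in>V. L x = L y"
proof -
  interpret S V E L g using assms(1,4) by unfold_locales
  have Cg: "C g" using assms(5) by (simp add: C_def)
  have bnd: "\<forall>h. C h \<longrightarrow> card (dom h) < Suc (card V)"
    using C_dom finV by (meson card_mono less_Suc_eq_le)
  obtain h where Mh: "M h"
    using Lattices_Big.ex_has_greatest_nat[of C g "\<lambda>h. card (dom h)", OF Cg bnd]
    unfolding M_def by blast
  have Ch: "C h" using Mh by (simp add: M_def)
  obtain u where u: "u \<in> V" "h u = None"
  proof (rule ccontr)
    assume "\<not> thesis"
    with that have tot: "\<forall>x\<in>V. h x \<noteq> None" by blast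
    let ?f = "\<lambda>x. the (h x)"
    have "proper_L_coloring V E L ?f"
      unfolding proper_L_coloring_def
    proof (intro conjI ballI impI)
      fix x assume "x \<in> V"
      then show "?f x \<in> L x" using tot C_col[OF Ch] by force
    next
      fix x y assume "x \<in> V" "y \<in> V" "E x y"
      then show "?f x \<noteq> ?f y" using tot C_prop[OF Ch] by force
    qed
    moreover have "{x \<in> V. ?f x = \<alpha>} = {x \<in> V. h x = Some \<alpha>}" for \<alpha>
      using tot by force
    ultimately have "\<forall>\<alpha>. card {x \<in> V. g x = Some \<alpha>} \<le> card {x \<in> V. ?f x = \<alpha>}"
      using Ch unfolding C_def by simp
    with \<open>proper_L_coloring V E L ?f\<close> show False using assms(6) by blast
  qed
  have hole: "\<exists>h'. M h' \<and> h' x = None" if "x \<in> V" for x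
  proof -
    have "joined_in V E u x" using assms(2) u(1) that by (simp add: connected_graph_def)
    then show ?thesis using reach[OF Mh u(2) order_refl] by blast
  qed
  have sub1: "L x \<subseteq> L y" if "E x y" for x y
  proof -
    have xV: "x \<in> V" using Ein[OF that] by simp
    obtain h' where "M h'" "h' x = None" using hole[OF xV] by blast
    then show ?thesis using sub[OF _ xV _ that] assms(3) by blast
  qed
  have edge: "E x y \<Longrightarrow> L x = L y" for x y
    using sub1 Esym by blast
  show ?thesis
  proof (intro ballI)
    fix x y assume "x \<in> V" "y \<in> V"
    then have "joined_in V E x y" using assms(2) by (simp add: connected_graph_def)
    then show "L x = L y" unfolding joined_in_def
      by (induction rule: rtranclp_induct) (auto dest: edge)
  qed
qed

end
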